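(* Let $p\ge 2$ and let $\Theta$ be a $p\times p$ correlation matrix (real symmetric positive semi-definite with unit diagonal). For $\alpha\in(0,\infty)^p$ define the $p\times p$ matrix $g(\Theta,\alpha)$ by $g_{ij}(\Theta,\alpha)=\Theta_{ij}\alpha_i\alpha_j$ for $i\neq j$ and $g_{ii}(\Theta,\alpha)=1$. Let $e^{(1)},\dots,e^{(p)}$ be the standard basis vectors of $\mathbb{R}^p$, let $\tilde m$ be the number of pairs $1\le i<j\le p$ with $\Theta_{ij}\neq 0$, and let $A$ be the $\tilde m\times p$ matrix whose rows are the vectors $e^{(i)}+e^{(j)}$ (as row vectors), one for each pair $i<j$ with $\Theta_{ij}\neq 0$. If $A$ has rank $p$, then the model is identifiable at $\Theta$: for any $\alpha,\beta\in(0,\infty)^p$ and any $p\times p$ correlation matrix $\Theta'$, if $\Theta'=\Theta$ and $g(\Theta',\beta)=g(\Theta,\alpha)$, then $\alpha=\beta$. Equivalently, the map $(\Theta,\alpha)\mapsto(\Theta,g(\Theta,\alpha))$ is injective in $\alpha\in(0,\infty)^p$ for every such $\Theta$.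
   Context: In the two-population model, one population of correlation matrices has expected value $\Theta$ and the other has expected value $g(\Theta,\alpha)$ (the multiplicative link function); identifiability means the pair of expected values $(\Theta, g(\Theta,\alpha))$ determines $(\Theta,\alpha)$. *)

theory Defs
  imports "HOL-Analysis.Analysis"
begin

definition correlation_matrix :: "real^'p^'p \<Rightarrow> bool" where
  "correlation_matrix T \<longleftrightarrow>
     transpose T = T \<and> (\<forall>x. 0 \<le> x \<bullet> (T *v x)) \<and> (\<forall>i. T $ i $ i = 1)"

definition link_g :: "real^'p^'p \<Rightarrow> real^'p \<Rightarrow> real^'p^'p" where
  "link_g T a = (\<chi> i j. if i = j then 1 else T $ i $ j * a $ i * a $ j)"

text \<open>The set of rows e^(i) + e^(j) (i < j, Theta_ij \<noteq> 0) of the matrix A.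
  The rank of A (= its row rank, cf. row_rank_def) is the dimension of this set.\<close>
definition edge_rows ::
  "((real, 'p::{finite,linorder}) vec, 'p) vec \<Rightarrow> (real, 'p) vec set" where
  "edge_rows T = {axis i 1 + axis j 1 | i j. i < j \<and> T $ i $ j \<noteq> 0}"

end

theory Submission
  imports Defs
begin

theorem mainTheorem2:
  fixes \<Theta> :: "((real, 'p::{finite,linorder}) vec, 'p) vec"
  assumes "CARD('p) \<ge> 2"
    and "correlation_matrix \<Theta>"
    and "dim (edge_rows \<Theta>) = CARD('p)"
  shows "\<forall>(\<alpha>::(real, 'p) vec) (\<beta>::(real, 'p) vec) (\<Theta>'::((real, 'p) vec, 'p) vec).
           (\<forall>i. 0 < \<alpha> $ i) \<and> (\<forall>i. 0 < \<beta> $ i) \<and> correlation_matrix \<Theta>' \<and>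
           \<Theta>' = \<Theta> \<and> link_g \<Theta>' \<beta> = link_g \<Theta> \<alpha> \<longrightarrow> \<alpha> = \<beta>"
proof (intro allI impI)
  fix \<alpha> \<beta> :: "(real, 'p) vec" and \<Theta>' :: "((real, 'p) vec, 'p) vec"
  assume H: "(\<forall>i. 0 < \<alpha> $ i) \<and> (\<forall>i. 0 < \<beta> $ i) \<and> correlation_matrix \<Theta>' \<and>
           \<Theta>' = \<Theta> \<and> link_g \<Theta>' \<beta> = link_g \<Theta> \<alpha>"
  have ap: "\<And>i. 0 < \<alpha> $ i" and bp: "\<And>i. 0 < \<beta> $ i" using H by auto
  have g: "link_g \<Theta> \<beta> = link_g \<Theta> \<alpha>" using H by auto
  have span: "span (edge_rows \<Theta>) = UNIV"
    using assms(3) dim_eq_full[where S="edge_rows \<Theta>"] by simp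
  define v where "v = (\<chi> i. ln (\<alpha> $ i) - ln (\<beta> $ i))"
  have orth: "orthogonal v y" if yE: "y \<in> edge_rows \<Theta>" for y
  proof -
    obtain i j where y: "y = axis i 1 + axis j 1" and ij: "i < j" "\<Theta> $ i $ j \<noteq> 0"
      using yE unfolding edge_rows_def by blast
    have "\<Theta> $ i $ j * \<beta> $ i * \<beta> $ j = \<Theta> $ i $ j * \<alpha> $ i * \<alpha> $ j"
      using arg_cong[OF g, of "\<lambda>M. M $ i $ j"] ij(1) by (simp add: link_g_def mult.assoc split: if_splits)
    hence "\<beta> $ i * \<beta> $ j = \<alpha> $ i * \<alpha> $ j" using ij by simp
    hence "ln (\<beta> $ i * \<beta> $ j) = ln (\<alpha> $ i * \<alpha> $ j)" by simp
    hence "ln (\<beta> $ i) + ln (\<beta> $ j) = ln (\<alpha> $ i) + ln (\<alpha> $ j)"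
      using ap[of i] ap[of j] bp[of i] bp[of j] by (simp add: ln_mult)
    thus ?thesis unfolding orthogonal_def y v_def
      by (simp add: inner_add_right inner_axis)
  qed
  have "orthogonal v v" using orthogonal_to_span[OF _ orth] span by auto
  hence "v = 0" by (simp add: orthogonal_def)
  hence "\<And>i. ln (\<alpha> $ i) = ln (\<beta> $ i)"
    by (metis v_def vec_lambda_beta zero_index eq_iff_diff_eq_0)
  hence "\<And>i. \<alpha> $ i = \<beta> $ i" using ap bp by simp
  thus "\<alpha> = \<beta>" by (simp add: vec_eq_iff)
qed

end
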